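(* In every Choi-defined resource theory, for every system $A$ the maximally mixed state $\frac{1}{d_A}\mathbb{1}_A$ is a free state.
   Context: A quantum resource theory specifies, for all finite-dimensional systems, a set of free channels containing the identity, swap and discarding (partial trace) channels and closed under sequential and parallel composition; free states are those preparable by free channels, and the family of free states is closed under tensor product, partial trace and system swaps. For a channel $\mathcal{M}_{A\to B}$ its renormalized Choi matrix is $\frac{1}{d_A}(\mathcal{M}_{A\to B}\otimes\mathcal{I}_{A'})(\Phi_{AA'})$, where $A'$ is a copy of $A$, $d_A=\dim A$ and $\Phi_{AA'}=\sum_{x,y}|x\rangle\langle y|_A\otimes|x\rangle\langle y|_{A'}$ for a fixed orthonormal basis. A Choi-defined resource theory (CDRT) is a resource theory in which a channel is free if and only if its renormalized Choi matrix is a free state. *)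

theory Defs
  imports Complex_Main "Jordan_Normal_Form.Matrix"
begin

text \<open>Systems are modelled by their (positive) dimension. A composite system A B of
dimensions a and b has dimension a*b, with basis index (i,k) encoded as i*b+k.\<close>

definition mtrace :: "complex mat \<Rightarrow> complex" where
  "mtrace X = (\<Sum>i<dim_row X. X $$ (i,i))"

definition unitE :: "nat \<Rightarrow> nat \<Rightarrow> nat \<Rightarrow> complex mat" where
  "unitE n i j = mat n n (\<lambda>(r,s). if r = i \<and> s = j then 1 else 0)"

definition kron :: "complex mat \<Rightarrow> complex mat \<Rightarrow> complex mat" where
  "kron A B = mat (dim_row A * dim_row B) (dim_col A * dim_col B)
     (\<lambda>(i,j). A $$ (i div dim_row B, j div dim_col B) * B $$ (i mod dim_row B, j mod dim_col B))"

text \<open>parallel composition M (x) N of maps M : a -> b and N : c -> d, defined by linearity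
on matrix units\<close>
definition par :: "nat \<Rightarrow> nat \<Rightarrow> nat \<Rightarrow> nat \<Rightarrow> (complex mat \<Rightarrow> complex mat)
    \<Rightarrow> (complex mat \<Rightarrow> complex mat) \<Rightarrow> complex mat \<Rightarrow> complex mat" where
  "par a b c d M N X = mat (b*d) (b*d) (\<lambda>(r,s).
     \<Sum>i<a. \<Sum>j<a. \<Sum>k<c. \<Sum>l<c.
        X $$ (i*c+k, j*c+l) * kron (M (unitE a i j)) (N (unitE c k l)) $$ (r,s))"

definition swap_ch :: "nat \<Rightarrow> nat \<Rightarrow> complex mat \<Rightarrow> complex mat" where
  "swap_ch a b X = mat (b*a) (b*a)
     (\<lambda>(r,s). X $$ ((r mod a)*b + r div a, (s mod a)*b + s div a))"

definition ptrace2 :: "nat \<Rightarrow> nat \<Rightarrow> complex mat \<Rightarrow> complex mat" where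
  "ptrace2 a b X = mat a a (\<lambda>(i,j). \<Sum>k<b. X $$ (i*b+k, j*b+k))"

definition psd :: "nat \<Rightarrow> complex mat \<Rightarrow> bool" where
  "psd n P \<longleftrightarrow> P \<in> carrier_mat n n \<and>
     (\<forall>v :: nat \<Rightarrow> complex. let q = (\<Sum>i<n. \<Sum>j<n. cnj (v i) * P $$ (i,j) * v j)
        in Im q = 0 \<and> Re q \<ge> 0)"

definition channel :: "nat \<Rightarrow> nat \<Rightarrow> (complex mat \<Rightarrow> complex mat) \<Rightarrow> bool" where
  "channel a b M \<longleftrightarrow>
     (\<forall>X \<in> carrier_mat a a. M X \<in> carrier_mat b b) \<and>
     (\<forall>X \<in> carrier_mat a a. \<forall>Y \<in> carrier_mat a a. M (X + Y) = M X + M Y) \<and>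
     (\<forall>X \<in> carrier_mat a a. \<forall>c. M (c \<cdot>\<^sub>m X) = c \<cdot>\<^sub>m M X) \<and>
     (\<forall>X \<in> carrier_mat a a. mtrace (M X) = mtrace X) \<and>
     (\<forall>k P. 0 < k \<longrightarrow> psd (a*k) P \<longrightarrow> psd (b*k) (par a b k k M id P))"

text \<open>free states of dimension d: those preparable by a free channel from the trivial system\<close>
definition free_state :: "(nat \<Rightarrow> nat \<Rightarrow> (complex mat \<Rightarrow> complex mat) \<Rightarrow> bool)
    \<Rightarrow> nat \<Rightarrow> complex mat \<Rightarrow> bool" where
  "free_state F d \<rho> \<longleftrightarrow> (\<exists>M. F 1 d M \<and> \<rho> = M (1\<^sub>m 1))"

text \<open>F a b M: M is a free channel from the system of dimension a to that of dimension b\<close>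
definition resource_theory :: "(nat \<Rightarrow> nat \<Rightarrow> (complex mat \<Rightarrow> complex mat) \<Rightarrow> bool) \<Rightarrow> bool" where
  "resource_theory F \<longleftrightarrow>
     (\<forall>a b M. F a b M \<longrightarrow> 0 < a \<and> 0 < b \<and> channel a b M) \<and>
     (\<forall>a. 0 < a \<longrightarrow> F a a id) \<and>
     (\<forall>a b. 0 < a \<longrightarrow> 0 < b \<longrightarrow> F (a*b) (b*a) (swap_ch a b)) \<and>
     (\<forall>a b. 0 < a \<longrightarrow> 0 < b \<longrightarrow> F (a*b) a (ptrace2 a b)) \<and>
     (\<forall>a b c M N. F a b M \<longrightarrow> F b c N \<longrightarrow> F a c (N \<circ> M)) \<and>
     (\<forall>a b c d M N. F a b M \<longrightarrow> F c d N \<longrightarrow> F (a*c) (b*d) (par a b c d M N)) \<and>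
     (\<forall>a b \<rho> \<sigma>. free_state F a \<rho> \<longrightarrow> free_state F b \<sigma> \<longrightarrow> free_state F (a*b) (kron \<rho> \<sigma>)) \<and>
     (\<forall>a b \<rho>. 0 < a \<longrightarrow> 0 < b \<longrightarrow> free_state F (a*b) \<rho> \<longrightarrow> free_state F a (ptrace2 a b \<rho>)) \<and>
     (\<forall>a b \<rho>. 0 < a \<longrightarrow> 0 < b \<longrightarrow> free_state F (a*b) \<rho> \<longrightarrow> free_state F (b*a) (swap_ch a b \<rho>))"

text \<open>unnormalized maximally entangled Phi_{AA'} = sum_{x,y} |x><y| (x) |x><y|\<close>
definition Phi :: "nat \<Rightarrow> complex mat" where
  "Phi a = mat (a*a) (a*a) (\<lambda>(r,s). if r div a = r mod a \<and> s div a = s mod a then 1 else 0)"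

text \<open>renormalized Choi matrix (1/d_A) (M (x) I_{A'})(Phi_{AA'}), on the system B A'\<close>
definition choi :: "nat \<Rightarrow> nat \<Rightarrow> (complex mat \<Rightarrow> complex mat) \<Rightarrow> complex mat" where
  "choi a b M = (1 / of_nat a) \<cdot>\<^sub>m par a b a a M id (Phi a)"

definition CDRT :: "(nat \<Rightarrow> nat \<Rightarrow> (complex mat \<Rightarrow> complex mat) \<Rightarrow> bool) \<Rightarrow> bool" where
  "CDRT F \<longleftrightarrow> resource_theory F \<and>
     (\<forall>a b M. 0 < a \<longrightarrow> 0 < b \<longrightarrow> channel a b M \<longrightarrow>
        (F a b M \<longleftrightarrow> free_state F (b*a) (choi a b M)))"

end

theory Submission
  imports Defs
begin
lemma kron_unit:
  assumes "r < d*d" "s < d*d" "i < d" "j < d" "k < d" "l < d"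
  shows "kron (unitE d i j) (unitE d k l) $$ (r,s) =
    (if l = s mod d then if k = r mod d then if j = s div d then if i = r div d then 1 else 0 else 0 else 0 else 0)"
proof -
  have "r div d < d" "s div d < d" using assms(1,2)
    by (simp_all add: less_mult_imp_div_less)
  moreover have "r mod d < d" "s mod d < d" using assms by auto
  ultimately show ?thesis using assms
    by (simp add: kron_def unitE_def)
qed

lemma par_id_Phi:
  assumes "0 < d"
  shows "par d d d d id id (Phi d) = Phi d"
proof (rule eq_matI)
  show "dim_row (par d d d d id id (Phi d)) = dim_row (Phi d)"
    "dim_col (par d d d d id id (Phi d)) = dim_col (Phi d)"
    by (simp_all add: par_def Phi_def)
  fix r s assume r: "r < dim_row (Phi d)" and s: "s < dim_col (Phi d)"
  hence r': "r < d*d" and s': "s < d*d" by (simp_all add: Phi_def)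
  have rd: "r div d < d" "s div d < d" using r' s'
    by (simp_all add: less_mult_imp_div_less)
  have md: "r mod d < d" "s mod d < d" using assms by auto
  have "par d d d d id id (Phi d) $$ (r,s) =
    (\<Sum>i<d. \<Sum>j<d. \<Sum>k<d. \<Sum>l<d.
      (if l = s mod d then if k = r mod d then if j = s div d then if i = r div d then
        Phi d $$ (i*d+k, j*d+l) else 0 else 0 else 0 else 0))" (is "_ = ?rhs")
  proof -
    have e: "\<And>i j k l. i \<in> {..<d} \<Longrightarrow> j \<in> {..<d} \<Longrightarrow> k \<in> {..<d} \<Longrightarrow> l \<in> {..<d} \<Longrightarrow>
      Phi d $$ (i*d+k, j*d+l) * kron (id (unitE d i j)) (id (unitE d k l)) $$ (r,s) =
      (if l = s mod d then if k = r mod d then if j = s div d then if i = r div d then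
        Phi d $$ (i*d+k, j*d+l) else 0 else 0 else 0 else 0)"
      using r' s' by (simp only: id_apply kron_unit lessThan_iff) simp
    have "par d d d d id id (Phi d) $$ (r,s) = (\<Sum>i<d. \<Sum>j<d. \<Sum>k<d. \<Sum>l<d.
        Phi d $$ (i*d+k, j*d+l) * kron (id (unitE d i j)) (id (unitE d k l)) $$ (r,s))"
      unfolding par_def using r' s' by simp
    also have "\<dots> = ?rhs"
      by (intro sum.cong refl) (rule e; assumption)
    finally show ?thesis .
  qed
  also have "\<dots> = Phi d $$ ((r div d)*d + r mod d, (s div d)*d + s mod d)"
    using rd md by (simp add: sum.delta)
  also have "\<dots> = Phi d $$ (r,s)" by simp
  finally show "par d d d d id id (Phi d) $$ (r,s) = Phi d $$ (r,s)" .
qed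

lemma ptrace_choi_id:
  assumes "0 < d"
  shows "ptrace2 d d (choi d d id) = (1 / of_nat d) \<cdot>\<^sub>m 1\<^sub>m d"
proof (rule eq_matI)
  show "dim_row (ptrace2 d d (choi d d id)) = dim_row ((1 / of_nat d) \<cdot>\<^sub>m 1\<^sub>m d)"
    "dim_col (ptrace2 d d (choi d d id)) = dim_col ((1 / of_nat d) \<cdot>\<^sub>m 1\<^sub>m d)"
    by (simp_all add: ptrace2_def)
  fix i j assume "i < dim_row ((1 / of_nat d) \<cdot>\<^sub>m 1\<^sub>m d)" "j < dim_col ((1 / of_nat d) \<cdot>\<^sub>m 1\<^sub>m d)"
  hence i: "i < d" and j: "j < d" by simp_all
  have lt: "a*d+k < d*d" if "a < d" "k < d" for a k :: nat
  proof -
    have "a*d + k < a*d + d" using that by simp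
    also have "\<dots> = (Suc a)*d" by simp
    also have "\<dots> \<le> d*d" using that by (intro mult_right_mono) auto
    finally show "a*d+k < d*d" .
  qed
  have e: "choi d d id $$ (i*d+k, j*d+k) = (if k = i then if k = j then 1 / of_nat d else 0 else 0)"
    if "k \<in> {..<d}" for k
  proof -
    have "choi d d id $$ (i*d+k, j*d+k) = (1 / of_nat d) * Phi d $$ (i*d+k, j*d+k)"
      unfolding choi_def par_id_Phi[OF assms] using lt[OF i] lt[OF j] that
      by (simp add: Phi_def)
    also have "\<dots> = (if k = i then if k = j then 1 / of_nat d else 0 else 0)"
      using lt[OF i] lt[OF j] that i j by (auto simp: Phi_def)
    finally show ?thesis .
  qed
  have "ptrace2 d d (choi d d id) $$ (i,j) = (\<Sum>k<d. choi d d id $$ (i*d+k, j*d+k))"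
    using i j by (simp add: ptrace2_def)
  also have "\<dots> = (\<Sum>k<d. (if k = i then if k = j then 1 / of_nat d else 0 else 0))"
    by (intro sum.cong refl) (rule e)
  also have "\<dots> = ((1 / of_nat d) \<cdot>\<^sub>m 1\<^sub>m d) $$ (i,j)" using i j by (simp add: sum.delta)
  finally show "ptrace2 d d (choi d d id) $$ (i,j) = ((1 / of_nat d) \<cdot>\<^sub>m 1\<^sub>m d) $$ (i,j)" .
qed

theorem corollary1:
  fixes F :: "nat \<Rightarrow> nat \<Rightarrow> (complex mat \<Rightarrow> complex mat) \<Rightarrow> bool"
    and d :: nat
  assumes "CDRT F" and "0 < d"
  shows "free_state F d ((1 / of_nat d) \<cdot>\<^sub>m 1\<^sub>m d)"
proof -
  have rt: "resource_theory F" using assms(1) unfolding CDRT_def by (elim conjE)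
  have C: "\<forall>a b M. 0 < a \<longrightarrow> 0 < b \<longrightarrow> channel a b M \<longrightarrow>
        (F a b M \<longleftrightarrow> free_state F (b*a) (choi a b M))"
    using assms(1) unfolding CDRT_def by (elim conjE)
  have R1: "\<forall>a b M. F a b M \<longrightarrow> 0 < a \<and> 0 < b \<and> channel a b M"
    using rt unfolding resource_theory_def by (elim conjE)
  have R2: "\<forall>a. 0 < a \<longrightarrow> F a a id"
    using rt unfolding resource_theory_def by (elim conjE)
  have R3: "\<forall>a b \<rho>. 0 < a \<longrightarrow> 0 < b \<longrightarrow> free_state F (a*b) \<rho> \<longrightarrow> free_state F a (ptrace2 a b \<rho>)"
    using rt unfolding resource_theory_def by (elim conjE)
  have Fid: "F d d id" using R2 assms(2) by simp
  have ch: "channel d d id" using R1 Fid by simp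
  have "free_state F (d*d) (choi d d id)"
    using C assms(2) ch Fid by simp
  hence "free_state F d (ptrace2 d d (choi d d id))"
    using R3 assms(2) by simp
  thus ?thesis using ptrace_choi_id[OF assms(2)] by simp
qed

end
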